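(* Every finite forest satisfies the bunkbed conjecture: for every forest $T$, every symmetric weight $\mu$ on $BB(T)$, and all $x,y\in V(T)$, $\mathbb P_{BB(T),\mu}(x^-\sim y^-)\ge \mathbb P_{BB(T),\mu}(x^-\sim y^+)$.
   Context: For a graph $G$, a weight is a function $\mu\colon E(G)\to[0,1]$; the associated edge-percolation probability space has sample space $\mathscr P(E(G))$, with $\mathbb P_{G,\mu}(X)=\prod_{e\in X}\mu(e)\prod_{e\notin X}(1-\mu(e))$ for $X\subseteq E(G)$, i.e. each edge $e$ is independently open with probability $\mu(e)$. For vertices $x,y$, $(x\sim y)$ is the event that $x$ and $y$ are joined by a path of open edges. The bunkbed graph $BB(G)=G\,\Box\,K_2$ has vertex set $V(G)\times\{0,1\}$, writing $x^-=(x,0)$, $x^+=(x,1)$, with edges $x^-y^-$ and $x^+y^+$ for every $xy\in E(G)$ and vertical edges $x^-x^+$ for every $x\in V(G)$. A weight $\mu$ on $BB(G)$ is symmetric if $\mu(x^-y^-)=\mu(x^+y^+)$ for every $xy\in E(G)$. *)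

theory Defs
  imports Complex_Main
begin

definition simple_graph :: "'a set \<Rightarrow> 'a set set \<Rightarrow> bool" where
  "simple_graph V E \<longleftrightarrow> finite V \<and> (\<forall>e\<in>E. \<exists>u v. u \<in> V \<and> v \<in> V \<and> u \<noteq> v \<and> e = {u, v})"

definition is_cycle :: "'a set \<Rightarrow> 'a set set \<Rightarrow> 'a list \<Rightarrow> bool" where
  "is_cycle V E vs \<longleftrightarrow> length vs \<ge> 3 \<and> distinct vs \<and> set vs \<subseteq> V \<and>
     (\<forall>i < length vs. {vs ! i, vs ! ((i + 1) mod length vs)} \<in> E)"

definition forest :: "'a set \<Rightarrow> 'a set set \<Rightarrow> bool" where
  "forest V E \<longleftrightarrow> simple_graph V E \<and> (\<nexists>vs. is_cycle V E vs)"

text \<open>Bunkbed graph: x^- = (x, False), x^+ = (x, True).\<close>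

definition bb_vertices :: "'a set \<Rightarrow> ('a \<times> bool) set" where
  "bb_vertices V = V \<times> UNIV"

definition bb_edges :: "'a set \<Rightarrow> 'a set set \<Rightarrow> ('a \<times> bool) set set" where
  "bb_edges V E =
     {{(x, False), (y, False)} | x y. {x, y} \<in> E} \<union>
     {{(x, True), (y, True)} | x y. {x, y} \<in> E} \<union>
     {{(x, False), (x, True)} | x. x \<in> V}"

definition weight :: "'v set set \<Rightarrow> ('v set \<Rightarrow> real) \<Rightarrow> bool" where
  "weight E \<mu> \<longleftrightarrow> (\<forall>e\<in>E. 0 \<le> \<mu> e \<and> \<mu> e \<le> 1)"

definition symmetric_bb_weight :: "'a set set \<Rightarrow> (('a \<times> bool) set \<Rightarrow> real) \<Rightarrow> bool" where
  "symmetric_bb_weight E \<mu> \<longleftrightarrow>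
     (\<forall>x y. {x, y} \<in> E \<longrightarrow> \<mu> {(x, False), (y, False)} = \<mu> {(x, True), (y, True)})"

definition joined :: "'v set set \<Rightarrow> 'v \<Rightarrow> 'v \<Rightarrow> bool" where
  "joined X u v \<longleftrightarrow> (u, v) \<in> {(a, b). {a, b} \<in> X}\<^sup>*"

definition perc_prob :: "'v set set \<Rightarrow> ('v set \<Rightarrow> real) \<Rightarrow> ('v set set \<Rightarrow> bool) \<Rightarrow> real" where
  "perc_prob E \<mu> A =
     (\<Sum>X\<in>{X. X \<subseteq> E \<and> A X}. (\<Prod>e\<in>X. \<mu> e) * (\<Prod>e\<in>E - X. 1 - \<mu> e))"

end

theory Submission
  imports Defs
begin


lemma joined_refl[simp]: "joined X u u" by (simp add: joined_def)

lemma joined_edge: "{a,b} \<in> X \<Longrightarrow> joined X a b"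
  by (auto simp: joined_def)

lemma joined_trans: "joined X a b \<Longrightarrow> joined X b c \<Longrightarrow> joined X a c"
  unfolding joined_def by (rule rtrancl_trans)

lemma joined_mono: "X \<subseteq> Y \<Longrightarrow> joined X a b \<Longrightarrow> joined Y a b"
  unfolding joined_def by (erule rtrancl_mono[THEN subsetD, rotated]) auto

lemma joined_sym: assumes "joined X a b" shows "joined X b a"
proof -
  have "(a,b) \<in> {(a, b). {a, b} \<in> X}\<^sup>*" using assms by (simp add: joined_def)
  then have "(b,a) \<in> {(a, b). {a, b} \<in> X}\<^sup>*"
  proof (induction rule: rtrancl_induct)
    case base then show ?case by simp
  next
    case (step c d)
    have "(d,c) \<in> {(a, b). {a, b} \<in> X}" using step(2) by (auto simp: insert_commute)
    then show ?case using step(3) by (rule converse_rtrancl_into_rtrancl)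
  qed
  then show ?thesis by (simp add: joined_def)
qed

lemma joined_map:
  assumes "\<And>a b. {a,b} \<in> X \<Longrightarrow> joined Y (h a) (h b)" and "joined X u v"
  shows "joined Y (h u) (h v)"
proof -
  have "(u,v) \<in> {(a,b). {a,b} \<in> X}\<^sup>*" using assms(2) by (simp add: joined_def)
  then show ?thesis
  proof (induction rule: rtrancl_induct)
    case base then show ?case by simp
  next
    case (step b c) then show ?case using assms(1)[of b c] joined_trans by auto
  qed
qed

lemma joined_cross:
  assumes "joined X u v" "u \<in> A" "v \<notin> A"
  shows "\<exists>a b. {a,b} \<in> X \<and> a \<in> A \<and> b \<notin> A \<and> joined {e\<in>X. e \<subseteq> A} u a"
proof -
  have "(u,v) \<in> {(a,b). {a,b} \<in> X}\<^sup>*" using assms(1) by (simp add: joined_def)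
  then show ?thesis using assms(2,3)
  proof (induction rule: converse_rtrancl_induct)
    case base then show ?case by simp
  next
    case (step y z)
    show ?case
    proof (cases "z \<in> A")
      case True
      with step obtain a b where ab: "{a,b} \<in> X" "a \<in> A" "b \<notin> A" "joined {e\<in>X. e \<subseteq> A} z a" by blast
      have "{y,z} \<in> {e\<in>X. e \<subseteq> A}" using step True by auto
      then have "joined {e\<in>X. e \<subseteq> A} y z" by (rule joined_edge)
      then have "joined {e\<in>X. e \<subseteq> A} y a" using ab(4) by (rule joined_trans)
      then show ?thesis using ab(1,2,3) by (intro exI[of _ a] exI[of _ b]) simp
    next
      case False
      have "{y,z} \<in> X" using step(1) by simp
      then show ?thesis using False step.prems by (intro exI[of _ y] exI[of _ z]) simp
    qed
  qed
qed

lemma rtrancl_distinct_path: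
  assumes "(a,b) \<in> R\<^sup>*"
  shows "\<exists>ps. ps \<noteq> [] \<and> hd ps = a \<and> last ps = b \<and> distinct ps \<and> (\<forall>i. Suc i < length ps \<longrightarrow> (ps!i, ps!Suc i) \<in> R)"
using assms
proof (induction rule: converse_rtrancl_induct)
  case base then show ?case by (intro exI[of _ "[b]"]) auto
next
  case (step y z)
  then obtain ps where ps: "ps \<noteq> []" "hd ps = z" "last ps = b" "distinct ps"
    "\<forall>i. Suc i < length ps \<longrightarrow> (ps!i, ps!Suc i) \<in> R" by blast
  show ?case
  proof (cases "y \<in> set ps")
    case True
    then obtain j where j: "j < length ps" "ps!j = y" by (auto simp: in_set_conv_nth)
    let ?qs = "drop j ps"
    have "?qs \<noteq> []" using j by simp
    moreover have "hd ?qs = y" using j by (simp add: hd_drop_conv_nth)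
    moreover have "last ?qs = b" using j ps by simp
    moreover have "distinct ?qs" using ps by simp
    moreover have "\<forall>i. Suc i < length ?qs \<longrightarrow> (?qs!i, ?qs!Suc i) \<in> R"
    proof (intro allI impI)
      fix i assume "Suc i < length ?qs"
      then have "Suc (j+i) < length ps" by simp
      then have "(ps!(j+i), ps!Suc (j+i)) \<in> R" using ps(5) by blast
      then show "(?qs!i, ?qs!Suc i) \<in> R" using j by simp
    qed
    ultimately show ?thesis by blast
  next
    case False
    let ?qs = "y # ps"
    have "\<forall>i. Suc i < length ?qs \<longrightarrow> (?qs!i, ?qs!Suc i) \<in> R"
    proof (intro allI impI)
      fix i assume i: "Suc i < length ?qs"
      show "(?qs!i, ?qs!Suc i) \<in> R"
      proof (cases i)
        case 0 then show ?thesis using step(1) ps(1,2) by (simp add: hd_conv_nth)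
      next
        case (Suc i') then show ?thesis using ps(5) i by simp
      qed
    qed
    moreover have "distinct ?qs" using ps False by simp
    moreover have "hd ?qs = y \<and> last ?qs = b \<and> ?qs \<noteq> []" using ps by auto
    ultimately have "?qs \<noteq> [] \<and> hd ?qs = y \<and> last ?qs = b \<and> distinct ?qs \<and> (\<forall>i. Suc i < length ?qs \<longrightarrow> (?qs!i, ?qs!Suc i) \<in> R)" by simp
    then show ?thesis by (rule exI)
  qed
qed

lemma edge_V: "simple_graph V E \<Longrightarrow> {u,v} \<in> E \<Longrightarrow> u \<in> V \<and> v \<in> V"
  unfolding simple_graph_def by (metis doubleton_eq_iff)

lemma forest_bridge:
  assumes F: "forest V E" and ab: "{a,b} \<in> E" "a \<noteq> b"
  shows "\<not> joined (E - {{a,b}}) a b"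
proof
  assume "joined (E - {{a,b}}) a b"
  then have "(a,b) \<in> {(u, v). {u, v} \<in> E - {{a,b}}}\<^sup>*" by (simp add: joined_def)
  from rtrancl_distinct_path[OF this] obtain ps where ps: "ps \<noteq> []" "hd ps = a" "last ps = b" "distinct ps"
    "\<forall>i. Suc i < length ps \<longrightarrow> (ps!i, ps!Suc i) \<in> {(u, v). {u, v} \<in> E - {{a,b}}}"
    by blast
  have ps5: "\<And>i. Suc i < length ps \<Longrightarrow> {ps!i, ps!Suc i} \<in> E - {{a,b}}" using ps(5) by blast
  have SG: "simple_graph V E" using F by (simp add: forest_def)
  have h0: "ps!0 = a" using ps by (simp add: hd_conv_nth)
  have hl: "ps!(length ps - 1) = b" using ps by (simp add: last_conv_nth)
  have "length ps \<noteq> 1" using h0 hl ab by auto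
  moreover have "length ps \<noteq> 2"
  proof
    assume "length ps = 2"
    then have "{ps!0, ps!Suc 0} \<in> E - {{a,b}}" using ps5 by auto
    then show False using h0 hl \<open>length ps = 2\<close> by simp
  qed
  moreover have "length ps \<noteq> 0" using ps(1) by simp
  ultimately have len: "length ps \<ge> 3" by linarith
  have edges: "\<forall>i < length ps. {ps ! i, ps ! ((i + 1) mod length ps)} \<in> E"
  proof (intro allI impI)
    fix i assume i: "i < length ps"
    show "{ps ! i, ps ! ((i + 1) mod length ps)} \<in> E"
    proof (cases "Suc i < length ps")
      case True then show ?thesis using ps5 by auto
    next
      case False
      then have si: "Suc i = length ps" using i by simp
      then have "i = length ps - 1" "(i+1) mod length ps = 0" by auto
      then show ?thesis using h0 hl ab by (simp add: insert_commute)
    qed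
  qed
  have "set ps \<subseteq> V"
  proof
    fix v assume "v \<in> set ps"
    then obtain i where "i < length ps" "ps!i = v" by (auto simp: in_set_conv_nth)
    then show "v \<in> V" using edges edge_V[OF SG] by blast
  qed
  then have "is_cycle V E ps" using len ps(4) edges by (simp add: is_cycle_def)
  then show False using F by (auto simp: forest_def)
qed



definition fl :: "'a \<times> bool \<Rightarrow> 'a \<times> bool" where "fl q = (fst q, \<not> snd q)"
definition touches :: "'a set \<Rightarrow> ('a \<times> bool) set \<Rightarrow> bool" where
  "touches W e \<longleftrightarrow> (\<exists>q\<in>e. fst q \<in> W)"
definition sg :: "'a set \<Rightarrow> ('a \<times> bool) set \<Rightarrow> ('a \<times> bool) set" where
  "sg W e = (if touches W e then fl ` e else e)"
definition hf :: "'a set \<Rightarrow> 'a \<times> bool \<Rightarrow> 'a \<times> bool" where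
  "hf W q = (if fst q \<in> W then fl q else q)"
definition wgt :: "'v set set \<Rightarrow> ('v set \<Rightarrow> real) \<Rightarrow> 'v set set \<Rightarrow> real" where
  "wgt BE \<mu> X = (\<Prod>e\<in>X. \<mu> e) * (\<Prod>e\<in>BE - X. 1 - \<mu> e)"

lemma fl_fl[simp]: "fl (fl q) = q" by (simp add: fl_def)
lemma fst_fl[simp]: "fst (fl q) = fst q" by (simp add: fl_def)
lemma fl_pair[simp]: "fl (a, s) = (a, \<not> s)" by (simp add: fl_def)

lemma touches_fl[simp]: "touches W (fl ` e) = touches W e"
  by (auto simp: touches_def)

lemma sg_touches[simp]: "touches W' (sg W e) = touches W' e"
  by (simp add: sg_def)

lemma sg_sg[simp]: "sg W (sg W e) = e"
  by (simp add: sg_def image_image)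

lemma perc_prob_wgt: "perc_prob BE \<mu> A = sum (wgt BE \<mu>) {X. X \<subseteq> BE \<and> A X}"
  by (simp add: perc_prob_def wgt_def)

lemma wgt_invol:
  assumes g: "\<And>e. e \<in> BE \<Longrightarrow> g e \<in> BE" "\<And>e. e \<in> BE \<Longrightarrow> g (g e) = e"
    "\<And>e. e \<in> BE \<Longrightarrow> \<mu> (g e) = \<mu> e"
  and X: "X \<subseteq> BE"
  shows "wgt BE \<mu> (g ` X) = wgt BE \<mu> X"
proof -
  have inj: "inj_on g BE" by (metis g(2) inj_onI)
  have injX: "inj_on g X" using inj X by (rule inj_on_subset)
  have injX': "inj_on g (BE - X)" using inj by (rule inj_on_subset) auto
  have 1: "(\<Prod>e\<in>g ` X. \<mu> e) = (\<Prod>e\<in>X. \<mu> e)"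
  proof -
    have "(\<Prod>e\<in>g ` X. \<mu> e) = (\<Prod>e\<in>X. \<mu> (g e))" using prod.reindex[OF injX] by simp
    also have "\<dots> = (\<Prod>e\<in>X. \<mu> e)" using X g(3) by (intro prod.cong) auto
    finally show ?thesis .
  qed
  have eq: "BE - g ` X = g ` (BE - X)"
  proof
    show "BE - g ` X \<subseteq> g ` (BE - X)"
    proof
      fix e assume e: "e \<in> BE - g ` X"
      then have "e = g (g e)" "g e \<in> BE" "g e \<notin> X" using g by (auto, metis image_eqI)
      then show "e \<in> g ` (BE - X)" by blast
    qed
    show "g ` (BE - X) \<subseteq> BE - g ` X"
    proof
      fix e assume "e \<in> g ` (BE - X)"
      then obtain d where d: "d \<in> BE" "d \<notin> X" "e = g d" by auto
      have "e \<notin> g ` X"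
      proof
        assume "e \<in> g ` X"
        then obtain c where "c \<in> X" "e = g c" by auto
        then have "g (g c) = g (g d)" using d by simp
        then have "c = d" using g(2) d X \<open>c \<in> X\<close> by auto
        then show False using d \<open>c \<in> X\<close> by simp
      qed
      then show "e \<in> BE - g ` X" using d g by auto
    qed
  qed
  have 2: "(\<Prod>e\<in>BE - g ` X. 1 - \<mu> e) = (\<Prod>e\<in>BE - X. 1 - \<mu> e)"
  proof -
    have "(\<Prod>e\<in>BE - g ` X. 1 - \<mu> e) = (\<Prod>e\<in>g ` (BE - X). 1 - \<mu> e)" using eq by simp
    also have "\<dots> = (\<Prod>e\<in>BE - X. 1 - \<mu> (g e))" using prod.reindex[OF injX'] by simp
    also have "\<dots> = (\<Prod>e\<in>BE - X. 1 - \<mu> e)" using g(3) by (intro prod.cong) auto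
    finally show ?thesis .
  qed
  show ?thesis using 1 2 by (simp add: wgt_def)
qed

lemma sum_le_invol:
  assumes fin: "finite BE" and nn: "\<And>X. X \<subseteq> BE \<Longrightarrow> wgt BE \<mu> X \<ge> 0"
  and phi: "\<And>X. X \<subseteq> BE \<Longrightarrow> \<phi> X \<subseteq> BE" "\<And>X. X \<subseteq> BE \<Longrightarrow> \<phi> (\<phi> X) = X"
    "\<And>X. X \<subseteq> BE \<Longrightarrow> wgt BE \<mu> (\<phi> X) = wgt BE \<mu> X"
  and AB: "\<And>X. X \<subseteq> BE \<Longrightarrow> B X \<Longrightarrow> A (\<phi> X)"
  shows "perc_prob BE \<mu> B \<le> perc_prob BE \<mu> A"
proof -
  let ?SB = "{X. X \<subseteq> BE \<and> B X}" and ?SA = "{X. X \<subseteq> BE \<and> A X}"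
  have inj: "inj_on \<phi> ?SB" by (rule inj_onI) (metis (no_types, lifting) mem_Collect_eq phi(2))
  have "sum (wgt BE \<mu>) ?SB = sum (wgt BE \<mu> \<circ> \<phi>) ?SB" using phi(3) by (intro sum.cong) auto
  also have "\<dots> = sum (wgt BE \<mu>) (\<phi> ` ?SB)" using sum.reindex[OF inj, of "wgt BE \<mu>"] by simp
  also have "\<dots> \<le> sum (wgt BE \<mu>) ?SA"
  proof (rule sum_mono2)
    have "?SA \<subseteq> Pow BE" by auto
    then show "finite ?SA" using fin by (meson finite_Pow_iff finite_subset)
    show "\<phi> ` ?SB \<subseteq> ?SA" using phi(1) AB by auto
    show "\<And>b. b \<in> ?SA - \<phi> ` ?SB \<Longrightarrow> 0 \<le> wgt BE \<mu> b" using nn by auto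
  qed
  finally show ?thesis by (simp add: perc_prob_wgt)
qed

lemma bbE_cases:
  assumes "{a,b} \<in> bb_edges V E"
  shows "fst a = fst b \<or> ({fst a, fst b} \<in> E \<and> snd a = snd b)"
  using assms unfolding bb_edges_def
  by (auto simp: doubleton_eq_iff insert_commute)

lemma bb_fl:
  assumes "e \<in> bb_edges V E"
  shows "fl ` e \<in> bb_edges V E"
  using assms unfolding bb_edges_def by (auto simp: insert_commute)

lemma bb_fl_mu:
  assumes "e \<in> bb_edges V E" "symmetric_bb_weight E \<mu>"
  shows "\<mu> (fl ` e) = \<mu> e"
  using assms unfolding bb_edges_def symmetric_bb_weight_def by (auto simp: insert_commute)

lemma bb_sg:
  assumes "e \<in> bb_edges V E"
  shows "sg W e \<in> bb_edges V E" "symmetric_bb_weight E \<mu> \<Longrightarrow> \<mu> (sg W e) = \<mu> e"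
  using assms bb_fl bb_fl_mu by (auto simp: sg_def)

lemma bb_finite:
  assumes "simple_graph V E" shows "finite (bb_edges V E)"
proof -
  have "bb_edges V E \<subseteq> Pow (V \<times> UNIV)"
    using edge_V[OF assms] unfolding bb_edges_def by auto
  moreover have "finite (Pow (V \<times> (UNIV :: bool set)))" using assms by (simp add: simple_graph_def)
  ultimately show ?thesis by (rule finite_subset)
qed

lemma proj:
  assumes "X \<subseteq> bb_edges V E" "joined X u v"
  shows "joined E (fst u) (fst v)"
proof (rule joined_map[OF _ assms(2)])
  fix a b assume "{a,b} \<in> X"
  then have "{a,b} \<in> bb_edges V E" using assms(1) by auto
  then show "joined E (fst a) (fst b)" using bbE_cases by (metis joined_edge joined_refl)
qed



locale bbt =
  fixes V :: "'a set" and E :: "'a set set" and \<mu> :: "('a \<times> bool) set \<Rightarrow> real"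
    and x y :: 'a and p :: "'a list" and k :: nat
  assumes forest: "forest V E"
    and wt: "weight (bb_edges V E) \<mu>"
    and symw: "symmetric_bb_weight E \<mu>"
    and xV: "x \<in> V" and yV: "y \<in> V"
    and plen: "length p = Suc k" and p0: "p!0 = x" and pk: "p!k = y" and pdist: "distinct p"
    and pedge: "\<And>i. i < k \<Longrightarrow> {p!i, p!Suc i} \<in> E"
begin

abbreviation "BE \<equiv> bb_edges V E"
definition cE where "cE i = {p!i, p!Suc i}"
definition W where "W i = (if i < k then {v\<in>V. joined (E - {cE i}) v y} else {})"
definition NT where "NT i = {e. \<not> touches (W i) e}"
definition sw where "sw i X \<longleftrightarrow> joined (X \<inter> NT i) (p!i, False) (p!i, True)"
definition Cand where "Cand X = {i. i \<le> k \<and> sw i X}"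
definition Phi where "Phi i X = sg (W i) ` X"
definition phi where "phi X = (if Cand X = {} then X else Phi (SOME i. i \<in> Cand X) X)"

lemma SG: "simple_graph V E" using forest by (simp add: forest_def)

lemma pV: "i \<le> k \<Longrightarrow> p!i \<in> V"
proof (cases "i < k")
  case True then show ?thesis using pedge edge_V[OF SG] by blast
next
  case False assume "i \<le> k" then have "i = k" using False by simp
  then show ?thesis using pk yV by simp
qed

lemma c_neq:
  assumes "m < k" "i < k" "m \<noteq> i" shows "cE m \<noteq> cE i"
proof
  assume "cE m = cE i"
  then have "(p!m = p!i \<and> p!Suc m = p!Suc i) \<or> (p!m = p!Suc i \<and> p!Suc m = p!i)"
    by (simp add: cE_def doubleton_eq_iff)
  moreover have "\<And>a b. a < length p \<Longrightarrow> b < length p \<Longrightarrow> p!a = p!b \<longleftrightarrow> a = b"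
    using pdist by (simp add: nth_eq_iff_index_eq)
  ultimately show False using assms plen by auto
qed

lemma walkpath:
  assumes "a \<le> b" "b \<le> k" "i < a \<or> b \<le> i" "i < k"
  shows "joined (E - {cE i}) (p!a) (p!b)"
  using assms
proof (induction b)
  case 0 then show ?case by simp
next
  case (Suc b)
  show ?case
  proof (cases "a = Suc b")
    case True then show ?thesis by simp
  next
    case False
    then have ab: "a \<le> b" using Suc by simp
    have IH: "joined (E - {cE i}) (p!a) (p!b)" using Suc ab by auto
    have bk: "b < k" using Suc by simp
    have "b \<noteq> i" using Suc ab by auto
    then have "cE b \<noteq> cE i" using c_neq bk Suc by blast
    moreover have "cE b \<in> E" using pedge bk by (simp add: cE_def)
    ultimately have "{p!b, p!Suc b} \<in> E - {cE i}" by (simp add: cE_def)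
    then have "joined (E - {cE i}) (p!b) (p!Suc b)" by (rule joined_edge)
    with IH show ?thesis by (rule joined_trans)
  qed
qed

lemma bridge_c: "i < k \<Longrightarrow> \<not> joined (E - {cE i}) (p!i) (p!Suc i)"
proof -
  assume ik: "i < k"
  have "p!i \<noteq> p!Suc i" using pdist plen ik by (simp add: nth_eq_iff_index_eq)
  then show ?thesis using forest_bridge[OF forest pedge[OF ik]] by (simp add: cE_def)
qed

lemma notin_W_self: "i \<le> k \<Longrightarrow> p!i \<notin> W i"
proof
  assume ik: "i \<le> k" and pin: "p!i \<in> W i"
  then have ik': "i < k" by (simp add: W_def split: if_splits)
  then have j1: "joined (E - {cE i}) (p!i) y" using pin by (simp add: W_def)
  have j2: "joined (E - {cE i}) (p!Suc i) (p!k)" using ik' by (intro walkpath) auto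
  have "joined (E - {cE i}) (p!i) (p!Suc i)" using j1 j2 pk by (metis joined_sym joined_trans)
  then show False using bridge_c ik' by blast
qed

lemma x_notin: "i \<le> k \<Longrightarrow> x \<notin> W i"
proof
  assume ik: "i \<le> k" and xin: "x \<in> W i"
  then have ik': "i < k" by (simp add: W_def split: if_splits)
  have j1: "joined (E - {cE i}) x y" using xin ik' by (simp add: W_def)
  have j2: "joined (E - {cE i}) (p!0) (p!i)" using ik' by (intro walkpath) auto
  have "joined (E - {cE i}) (p!i) y" using j1 j2 p0 by (metis joined_sym joined_trans)
  then have "p!i \<in> W i" using ik' pV[OF ik] by (simp add: W_def)
  then show False using notin_W_self ik by blast
qed

lemma Suc_in: "i < k \<Longrightarrow> p!Suc i \<in> W i"
proof -
  assume ik: "i < k"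
  have "joined (E - {cE i}) (p!Suc i) (p!k)" using ik by (intro walkpath) auto
  then show ?thesis using ik pk pV[of "Suc i"] by (simp add: W_def)
qed

lemma y_in: "i < k \<Longrightarrow> y \<in> W i"
  using yV by (simp add: W_def)

lemma F3T:
  assumes "{u,v} \<in> E" "u \<notin> W i" "v \<in> W i"
  shows "i < k \<and> u = p!i \<and> v = p!Suc i"
proof -
  have ik: "i < k" using assms(3) by (simp add: W_def split: if_splits)
  have uV: "u \<in> V" using edge_V[OF SG assms(1)] by simp
  have "{u,v} = cE i"
  proof (rule ccontr)
    assume "{u,v} \<noteq> cE i"
    then have "joined (E - {cE i}) u v" using assms(1) by (intro joined_edge) auto
    moreover have "joined (E - {cE i}) v y" using assms(3) ik by (simp add: W_def)
    ultimately have "joined (E - {cE i}) u y" by (rule joined_trans)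
    then have "u \<in> W i" using uV ik by (simp add: W_def)
    then show False using assms(2) by simp
  qed
  then have "(u = p!i \<and> v = p!Suc i) \<or> (u = p!Suc i \<and> v = p!i)"
    by (simp add: cE_def doubleton_eq_iff)
  moreover have "u \<noteq> p!Suc i" using Suc_in[OF ik] assms(2) by auto
  ultimately show ?thesis using ik by auto
qed

lemma W_mono:
  assumes "j \<le> i" "i \<le> k" shows "W i \<subseteq> W j"
proof (cases "i < k \<and> j < i")
  case False
  then show ?thesis using assms by (auto simp: W_def)
next
  case True
  then have ik: "i < k" and ji: "j < i" by auto
  show ?thesis
  proof
    fix v assume vin: "v \<in> W i"
    then have vV: "v \<in> V" and jv: "joined (E - {cE i}) v y" using ik by (auto simp: W_def)
    show "v \<in> W j"
    proof (rule ccontr)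
      assume vnot: "v \<notin> W j"
      have yW: "y \<notin> - W j" using y_in ji ik by simp
      obtain a b where ab: "{a,b} \<in> E - {cE i}" "a \<in> - W j" "b \<notin> - W j"
        and ja: "joined {e \<in> E - {cE i}. e \<subseteq> - W j} v a"
        using joined_cross[OF jv _ yW] vnot by auto
      have "a = p!j" using F3T[of a b j] ab by auto
      have "{e \<in> E - {cE i}. e \<subseteq> - W j} \<subseteq> E - {cE i}" by auto
      then have "joined (E - {cE i}) v a" using ja by (rule joined_mono)
      moreover have "joined (E - {cE i}) (p!0) (p!j)" using ji ik by (intro walkpath) auto
      ultimately have "joined (E - {cE i}) x y" using jv p0 \<open>a = p!j\<close> by (metis joined_sym joined_trans)
      then have "x \<in> W i" using xV ik by (simp add: W_def)
      then show False using x_notin ik by simp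
    qed
  qed
qed

lemma F3BB:
  assumes "{a,b} \<in> BE" "fst a \<notin> W i" "fst b \<in> W i"
  shows "i < k \<and> (\<exists>s. a = (p!i, s) \<and> b = (p!Suc i, s))"
proof -
  have "fst a \<noteq> fst b" using assms by auto
  then have "{fst a, fst b} \<in> E" "snd a = snd b" using bbE_cases[OF assms(1)] by auto
  then show ?thesis using F3T[of "fst a" "fst b" i] assms by (cases a, cases b) auto
qed

lemma Phi_BE: "X \<subseteq> BE \<Longrightarrow> Phi i X \<subseteq> BE"
proof
  fix e assume "X \<subseteq> BE" "e \<in> Phi i X"
  then obtain d where "d \<in> BE" "e = sg (W i) d" by (auto simp: Phi_def)
  then show "e \<in> BE" using bb_sg(1) by blast
qed

lemma Phi_Phi: "Phi i (Phi i X) = X"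
  by (simp add: Phi_def image_image)

lemma Phi_wgt: "X \<subseteq> BE \<Longrightarrow> wgt BE \<mu> (Phi i X) = wgt BE \<mu> X"
  unfolding Phi_def by (rule wgt_invol) (auto intro: bb_sg symw)

lemma caseA:
  assumes "W i \<subseteq> W j" shows "Phi i X \<inter> NT j = X \<inter> NT j"
proof -
  have fx: "\<And>e. e \<in> NT j \<Longrightarrow> sg (W i) e = e" using assms by (auto simp: NT_def sg_def touches_def)
  have inv: "\<And>e. sg (W i) e \<in> NT j \<longleftrightarrow> e \<in> NT j" by (simp add: NT_def)
  show ?thesis
  proof
    show "Phi i X \<inter> NT j \<subseteq> X \<inter> NT j" using fx inv by (auto simp: Phi_def)
    show "X \<inter> NT j \<subseteq> Phi i X \<inter> NT j"
    proof
      fix e assume e: "e \<in> X \<inter> NT j"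
      then have "e = sg (W i) e" using fx by simp
      then have "e \<in> sg (W i) ` X" using e by (metis IntD1 image_eqI)
      then show "e \<in> Phi i X \<inter> NT j" using e by (simp add: Phi_def)
    qed
  qed
qed

lemma H:
  assumes X: "X \<subseteq> BE" and ik: "i \<le> k" and swi: "sw i X"
    and Ninv: "\<And>e. sg (W i) e \<in> N \<longleftrightarrow> e \<in> N" and NTN: "NT i \<subseteq> N"
    and j: "joined (X \<inter> N) u v"
  shows "joined (Phi i X \<inter> N) (hf (W i) u) (hf (W i) v)"
proof (rule joined_map[OF _ j])
  fix a b assume ab: "{a,b} \<in> X \<inter> N"
  let ?Y = "Phi i X"
  have swY: "joined (?Y \<inter> NT i) (p!i, False) (p!i, True)"
    using caseA[of i i X] swi by (simp add: sw_def)
  have swY0: "joined (?Y \<inter> N) (p!i, False) (p!i, True)"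
  proof -
    have "?Y \<inter> NT i \<subseteq> ?Y \<inter> N" using NTN by auto
    then show ?thesis using swY by (rule joined_mono)
  qed
  have swY': "\<And>s. joined (?Y \<inter> N) (p!i, s) (p!i, \<not> s)"
  proof -
    fix s show "joined (?Y \<inter> N) (p!i, s) (p!i, \<not> s)"
      using swY0 joined_sym by (cases s) auto
  qed
  have sgY: "sg (W i) {a,b} \<in> ?Y \<inter> N" using ab Ninv by (auto simp: Phi_def)
  have abBE: "{a,b} \<in> BE" using ab X by auto
  consider (n) "fst a \<notin> W i" "fst b \<notin> W i" | (y) "fst a \<in> W i" "fst b \<in> W i"
    | (ab) "fst a \<notin> W i" "fst b \<in> W i" | (ba) "fst a \<in> W i" "fst b \<notin> W i" by blast
  then show "joined (?Y \<inter> N) (hf (W i) a) (hf (W i) b)"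
  proof cases
    case n
    then have "sg (W i) {a,b} = {a,b}" by (simp add: sg_def touches_def)
    then have "{a,b} \<in> ?Y \<inter> N" using sgY by simp
    then show ?thesis using n by (simp add: hf_def joined_edge)
  next
    case y
    then have "sg (W i) {a,b} = {hf (W i) a, hf (W i) b}" by (simp add: sg_def touches_def hf_def)
    then show ?thesis using sgY by (metis joined_edge)
  next
    case ab
    from F3BB[OF abBE ab] obtain s where s: "i < k" "a = (p!i, s)" "b = (p!Suc i, s)" by auto
    have "sg (W i) {a,b} = {(p!i, \<not> s), (p!Suc i, \<not> s)}" using ab s by (simp add: sg_def touches_def)
    then have e: "joined (?Y \<inter> N) (p!i, \<not> s) (p!Suc i, \<not> s)" using sgY by (metis joined_edge)
    have hfs: "hf (W i) a = (p!i, s)" "hf (W i) b = (p!Suc i, \<not> s)" using ab s by (auto simp: hf_def)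
    have "joined (?Y \<inter> N) (p!i, s) (p!Suc i, \<not> s)" using swY'[of s] e by (rule joined_trans)
    then show ?thesis using hfs by simp
  next
    case ba
    have baBE: "{b,a} \<in> BE" using abBE by (simp add: insert_commute)
    from F3BB[OF baBE ba(2,1)] obtain s where s: "i < k" "b = (p!i, s)" "a = (p!Suc i, s)" by auto
    have "sg (W i) {a,b} = {(p!Suc i, \<not> s), (p!i, \<not> s)}" using ba s by (simp add: sg_def touches_def)
    then have e: "joined (?Y \<inter> N) (p!Suc i, \<not> s) (p!i, \<not> s)" using sgY by (metis joined_edge)
    have hfs: "hf (W i) b = (p!i, s)" "hf (W i) a = (p!Suc i, \<not> s)" using ba s by (auto simp: hf_def)
    have "joined (?Y \<inter> N) (p!Suc i, \<not> s) (p!i, s)" using e swY'[of "\<not> s"] by (simp add: joined_trans)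
    then show ?thesis using hfs by simp
  qed
qed

lemma sw_Phi:
  assumes X: "X \<subseteq> BE" and ik: "i \<le> k" and swi: "sw i X" and jk: "j \<le> k"
  shows "sw j (Phi i X) \<longleftrightarrow> sw j X"
proof (cases "j \<le> i")
  case True
  then have "W i \<subseteq> W j" using W_mono ik by blast
  then show ?thesis using caseA by (simp add: sw_def)
next
  case False
  then have Wji: "W j \<subseteq> W i" using W_mono jk by auto
  then have NTs: "NT i \<subseteq> NT j" by (auto simp: NT_def touches_def)
  have Ninv: "\<And>e. sg (W i) e \<in> NT j \<longleftrightarrow> e \<in> NT j" by (simp add: NT_def)
  have swY: "sw i (Phi i X)" using caseA[of i i X] swi by (simp add: sw_def)
  have YBE: "Phi i X \<subseteq> BE" by (rule Phi_BE[OF X])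
  have key: "\<And>Z. Z \<subseteq> BE \<Longrightarrow> sw i Z \<Longrightarrow> sw j Z \<Longrightarrow> sw j (Phi i Z)"
  proof -
    fix Z assume Z: "Z \<subseteq> BE" "sw i Z" "sw j Z"
    have "joined (Phi i Z \<inter> NT j) (hf (W i) (p!j, False)) (hf (W i) (p!j, True))"
      using H[OF Z(1) ik Z(2) Ninv NTs, of "(p!j, False)" "(p!j, True)"] Z(3) by (simp add: sw_def)
    then show "sw j (Phi i Z)" by (cases "p!j \<in> W i") (auto simp: hf_def sw_def intro: joined_sym)
  qed
  show ?thesis
  proof
    assume "sw j (Phi i X)"
    from key[OF YBE swY this] show "sw j X" by (simp add: Phi_Phi)
  next
    assume "sw j X" from key[OF X swi this] show "sw j (Phi i X)" .
  qed
qed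

lemma Cand_Phi:
  assumes "X \<subseteq> BE" "i \<in> Cand X" shows "Cand (Phi i X) = Cand X"
  using sw_Phi[OF assms(1)] assms(2) by (auto simp: Cand_def)

lemma phi_BE: "X \<subseteq> BE \<Longrightarrow> phi X \<subseteq> BE"
  by (simp add: phi_def Phi_BE)

lemma phi_wgt: "X \<subseteq> BE \<Longrightarrow> wgt BE \<mu> (phi X) = wgt BE \<mu> X"
  by (simp add: phi_def Phi_wgt)

lemma phi_phi: 
  assumes X: "X \<subseteq> BE" shows "phi (phi X) = X"
proof (cases "Cand X = {}")
  case True then show ?thesis by (simp add: phi_def)
next
  case False
  define i where "i = (SOME i. i \<in> Cand X)"
  have iC: "i \<in> Cand X" using False unfolding i_def by (metis ex_in_conv someI)
  have 1: "phi X = Phi i X" using False by (simp add: phi_def i_def)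
  have 2: "Cand (Phi i X) = Cand X" by (rule Cand_Phi[OF X iC])
  show ?thesis using 1 2 False by (simp add: phi_def i_def[symmetric] Phi_Phi)
qed

lemma NTk: "NT k = UNIV" by (simp add: NT_def W_def touches_def)

lemma key:
  assumes X: "X \<subseteq> BE" and jxy: "joined X (x, False) (y, True)"
  shows "Cand X \<noteq> {}"
proof -
  define S where "S = {i. i \<le> k \<and> joined (X \<inter> NT i) (x, False) (p!i, True)}"
  have kS: "k \<in> S" using jxy by (simp add: S_def NTk pk)
  define i where "i = (LEAST i. i \<in> S)"
  have iS: "i \<in> S" using kS unfolding i_def by (rule LeastI)
  then have ik: "i \<le> k" and ji: "joined (X \<inter> NT i) (x, False) (p!i, True)" by (auto simp: S_def)
  have swi: "sw i X"
  proof (cases i)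
    case 0 then show ?thesis using ji p0 by (simp add: sw_def)
  next
    case (Suc j)
    have jk: "j < k" using ik Suc by simp
    have xA: "(x,False) \<in> {q. fst q \<notin> W j}" using x_notin[of j] jk by simp
    have vA: "(p!i, True) \<notin> {q. fst q \<notin> W j}" using Suc_in[OF jk] Suc by simp
    obtain a b where ab: "{a,b} \<in> X \<inter> NT i" "fst a \<notin> W j" "fst b \<in> W j"
       and ja: "joined {e \<in> X \<inter> NT i. e \<subseteq> {q. fst q \<notin> W j}} (x,False) a"
      using joined_cross[OF ji xA vA] by auto
    have abBE: "{a,b} \<in> BE" using ab X by auto
    from F3BB[OF abBE ab(2,3)] obtain s where s: "a = (p!j, s)" "b = (p!Suc j, s)" by auto
    have sub: "{e \<in> X \<inter> NT i. e \<subseteq> {q. fst q \<notin> W j}} \<subseteq> X \<inter> NT j"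
      by (auto simp: NT_def touches_def)
    have ja': "joined (X \<inter> NT j) (x, False) a" using joined_mono[OF sub ja] .
    have ns: "\<not> s"
    proof
      assume s': s
      then have "j \<in> S" using ja' s jk by (simp add: S_def)
      moreover have "j < i" using Suc by simp
      ultimately show False using not_less_Least i_def by blast
    qed
    have NTji: "NT j \<subseteq> NT i" using W_mono[of j i] ik Suc by (auto simp: NT_def touches_def)
    have "X \<inter> NT j \<subseteq> X \<inter> NT i" using NTji by auto
    from joined_mono[OF this ja'] have "joined (X \<inter> NT i) (x, False) (p!j, False)"
      using s ns by simp
    moreover have "joined (X \<inter> NT i) (p!j, False) (p!i, False)"
      using ab(1) s ns Suc by (simp add: joined_edge)
    ultimately have "joined (X \<inter> NT i) (x,False) (p!i, False)" by (rule joined_trans)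
    then show ?thesis using ji p0 unfolding sw_def by (meson joined_sym joined_trans)
  qed
  then show ?thesis using ik by (auto simp: Cand_def)
qed

lemma main_conn:
  assumes X: "X \<subseteq> BE" and jxy: "joined X (x, False) (y, True)"
  shows "joined (phi X) (x, False) (y, False)"
proof -
  have ne: "Cand X \<noteq> {}" by (rule key[OF X jxy])
  define i where "i = (SOME i. i \<in> Cand X)"
  have iC: "i \<in> Cand X" using ne unfolding i_def by (metis ex_in_conv someI)
  then have ik: "i \<le> k" and swi: "sw i X" by (auto simp: Cand_def)
  have phiX: "phi X = Phi i X" using ne by (simp add: phi_def i_def)
  have "joined (Phi i X \<inter> UNIV) (hf (W i) (x,False)) (hf (W i) (y,True))"
    by (rule H[OF X ik swi]) (auto simp: jxy)
  then have j1: "joined (Phi i X) (x,False) (hf (W i) (y,True))" using x_notin[OF ik] by (simp add: hf_def)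
  show ?thesis
  proof (cases "i < k")
    case True
    then have "y \<in> W i" by (rule y_in)
    then show ?thesis using j1 phiX by (simp add: hf_def)
  next
    case False
    then have ik': "i = k" using ik by simp
    then have Wi: "W i = {}" by (simp add: W_def)
    have "sw i (Phi i X)" using sw_Phi[OF X ik swi ik] swi by simp
    then have "joined (Phi i X) (y, False) (y, True)" using ik' pk by (simp add: sw_def NTk)
    then show ?thesis using j1 Wi phiX by (simp add: hf_def) (meson joined_sym joined_trans)
  qed
qed

lemma wgt_nn: "X \<subseteq> BE \<Longrightarrow> wgt BE \<mu> X \<ge> 0"
  using wt unfolding wgt_def weight_def
  by (intro mult_nonneg_nonneg prod_nonneg) auto

lemma bunk:
  "perc_prob BE \<mu> (\<lambda>X. joined X (x,False) (y,True)) \<le> perc_prob BE \<mu> (\<lambda>X. joined X (x,False) (y,False))"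
  by (rule sum_le_invol[where \<phi>=phi])
     (auto simp: bb_finite[OF SG] wgt_nn phi_BE phi_phi phi_wgt main_conn)

end



theorem corollary3p7:
  fixes V :: "'a set" and E :: "'a set set" and \<mu> :: "('a \<times> bool) set \<Rightarrow> real"
  assumes "forest V E"
    and "weight (bb_edges V E) \<mu>"
    and "symmetric_bb_weight E \<mu>"
    and "x \<in> V" and "y \<in> V"
  shows "perc_prob (bb_edges V E) \<mu> (\<lambda>X. joined X (x, False) (y, False))
         \<ge> perc_prob (bb_edges V E) \<mu> (\<lambda>X. joined X (x, False) (y, True))"
proof (cases "joined E x y")
  case False
  have empty: "{X. X \<subseteq> bb_edges V E \<and> joined X (x, False) (y, True)} = {}"
  proof -
    have "\<And>X. X \<subseteq> bb_edges V E \<Longrightarrow> \<not> joined X (x, False) (y, True)"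
      using proj[of _ V E "(x, False)" "(y, True)"] False by auto
    then show ?thesis by auto
  qed
  have 1: "perc_prob (bb_edges V E) \<mu> (\<lambda>X. joined X (x, False) (y, True)) = 0"
    by (simp only: perc_prob_wgt empty sum.empty)
  have "\<And>X. X \<subseteq> bb_edges V E \<Longrightarrow> wgt (bb_edges V E) \<mu> X \<ge> 0"
    using assms(2) unfolding wgt_def weight_def
    by (intro mult_nonneg_nonneg prod_nonneg) auto
  then have 2: "perc_prob (bb_edges V E) \<mu> (\<lambda>X. joined X (x, False) (y, False)) \<ge> 0"
    unfolding perc_prob_wgt by (intro sum_nonneg) auto
  show ?thesis using 1 2 by simp
next
  case True
  then have "(x,y) \<in> {(a,b). {a,b} \<in> E}\<^sup>*" by (simp add: joined_def)
  from rtrancl_distinct_path[OF this] obtain ps where ps: "ps \<noteq> []" "hd ps = x" "last ps = y"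
    "distinct ps" "\<forall>i. Suc i < length ps \<longrightarrow> (ps!i, ps!Suc i) \<in> {(a,b). {a,b} \<in> E}"
    by blast
  define k where "k = length ps - 1"
  have len: "length ps = Suc k" using ps(1) by (simp add: k_def)
  interpret bbt V E \<mu> x y ps k
  proof
    show "forest V E" "weight (bb_edges V E) \<mu>" "symmetric_bb_weight E \<mu>" "x \<in> V" "y \<in> V"
      using assms by auto
    show "length ps = Suc k" by (rule len)
    show "ps!0 = x" using ps by (simp add: hd_conv_nth)
    show "ps!k = y" using ps by (simp add: last_conv_nth k_def)
    show "distinct ps" by (rule ps(4))
    show "\<And>i. i < k \<Longrightarrow> {ps!i, ps!Suc i} \<in> E" using ps(5) len by auto
  qed
  show ?thesis using bunk by simp
qed

end
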